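(* Let $A=(a_{i,j})_{i,j\in\mathbf N}\in\mathcal A$. Suppose there exist positive constants $C$ and $c$ such that (i) $a_{i,j}=0$ whenever $i>Cj^c$, and (ii) $|a_{i,j}|\le Cj^c$ for all $i,j$. Then $A\in\mathcal{DR}$. Furthermore, the set of all elements of $\mathcal A$ satisfying these conditions (with constants depending on the matrix) is a subring of $\mathcal{DR}$.
   Context: $\mathbf N=\{1,2,\dots\}$. $\mathcal A$ is the ring of matrices $(a_{i,j})_{i,j\in\mathbf N}$ with complex entries and finitely many nonzero entries in each column. $\mathcal A$ acts on the right on the space $\mathbf C^{\mathbf N}$ of complex sequences by $(fA)(n)=\sum_m a_{m,n}f(m)$. $\mathcal{DS}\subseteq\mathbf C^{\mathbf N}$ is the subspace of sequences $f$ for which there exist positive constants $C,c$ with $|f(n)|\le Cn^c$ for all $n$. $\mathcal{DR}$ is the subalgebra of $\mathcal A$ consisting of all $A$ with $\mathcal{DS}\,A\subseteq\mathcal{DS}$. *)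

theory Defs
  imports "HOL-Analysis.Analysis"
begin

text \<open>Indices range over N = {1,2,...}; we model matrices as functions
  nat => nat => complex and sequences as nat => complex, and only entries
  with indices >= 1 are meaningful (index 0 is ignored everywhere).\<close>

type_synonym cmat = "nat \<Rightarrow> nat \<Rightarrow> complex"
type_synonym cseq = "nat \<Rightarrow> complex"

definition in_A :: "cmat \<Rightarrow> bool" where
  "in_A A \<longleftrightarrow> (\<forall>j\<ge>1. finite {i. i \<ge> 1 \<and> A i j \<noteq> 0})"

definition act :: "cseq \<Rightarrow> cmat \<Rightarrow> cseq" where
  "act f A = (\<lambda>n. \<Sum>m\<in>{m. m \<ge> 1 \<and> A m n \<noteq> 0}. A m n * f m)"

definition mat_add :: "cmat \<Rightarrow> cmat \<Rightarrow> cmat" where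
  "mat_add A B = (\<lambda>i j. A i j + B i j)"

definition mat_neg :: "cmat \<Rightarrow> cmat" where
  "mat_neg A = (\<lambda>i j. - A i j)"

definition mat_zero :: cmat where
  "mat_zero = (\<lambda>i j. 0)"

definition mat_one :: cmat where
  "mat_one = (\<lambda>i j. if i = j then 1 else 0)"

definition mat_mult :: "cmat \<Rightarrow> cmat \<Rightarrow> cmat" where
  "mat_mult A B = (\<lambda>i k. \<Sum>j\<in>{j. j \<ge> 1 \<and> B j k \<noteq> 0}. A i j * B j k)"

definition DS :: "cseq set" where
  "DS = {f. \<exists>C c. C > 0 \<and> c > 0 \<and>
           (\<forall>n\<ge>1. norm (f n) \<le> C * real n powr c)}"

definition DR :: "cmat set" where
  "DR = {A. in_A A \<and> (\<forall>f\<in>DS. act f A \<in> DS)}"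

definition poly_conds :: "real \<Rightarrow> real \<Rightarrow> cmat \<Rightarrow> bool" where
  "poly_conds C c A \<longleftrightarrow>
     (\<forall>i\<ge>1. \<forall>j\<ge>1. real i > C * real j powr c \<longrightarrow> A i j = 0) \<and>
     (\<forall>i\<ge>1. \<forall>j\<ge>1. norm (A i j) \<le> C * real j powr c)"

definition PB :: "cmat set" where
  "PB = {A. in_A A \<and> (\<exists>C c. C > 0 \<and> c > 0 \<and> poly_conds C c A)}"

end

theory Submission
  imports Defs
begin

lemma supp_sub:
  assumes "poly_conds C c A" "n \<ge> 1"
  shows "{m. m \<ge> 1 \<and> A m n \<noteq> 0} \<subseteq> {1..nat \<lfloor>C * real n powr c\<rfloor>}"
proof
  fix m assume m: "m \<in> {m. m \<ge> 1 \<and> A m n \<noteq> 0}"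
  hence "\<not> real m > C * real n powr c" using assms(1,2) unfolding poly_conds_def by auto
  hence "real m \<le> C * real n powr c" by simp
  hence "m \<le> nat \<lfloor>C * real n powr c\<rfloor>" by (simp add: le_nat_floor)
  thus "m \<in> {1..nat \<lfloor>C * real n powr c\<rfloor>}" using m by auto
qed

lemma supp_fin:
  assumes "poly_conds C c A" "n \<ge> 1"
  shows "finite {m. m \<ge> 1 \<and> A m n \<noteq> 0}"
  using supp_sub[OF assms] finite_subset by blast

lemma supp_card:
  assumes "poly_conds C c A" "n \<ge> 1" "C > 0"
  shows "real (card {m. m \<ge> 1 \<and> A m n \<noteq> 0}) \<le> C * real n powr c"
proof -
  have "card {m. m \<ge> 1 \<and> A m n \<noteq> 0} \<le> card {1..nat \<lfloor>C * real n powr c\<rfloor>}"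
    by (rule card_mono[OF _ supp_sub[OF assms(1,2)]]) simp
  also have "\<dots> = nat \<lfloor>C * real n powr c\<rfloor>" by simp
  finally have "real (card {m. m \<ge> 1 \<and> A m n \<noteq> 0}) \<le> real (nat \<lfloor>C * real n powr c\<rfloor>)" by simp
  also have "\<dots> \<le> C * real n powr c" using assms(3)
    by (intro of_nat_floor) simp
  finally show ?thesis .
qed

lemma poly_in_A: "poly_conds C c A \<Longrightarrow> in_A A"
  unfolding in_A_def using supp_fin by blast

lemma sum_bound:
  fixes g :: "nat \<Rightarrow> complex"
  assumes "finite S" "real (card S) \<le> X" "\<And>m. m \<in> S \<Longrightarrow> norm (g m) \<le> Y" "Y \<ge> 0"
  shows "norm (sum g S) \<le> X * Y"
proof -
  have "norm (sum g S) \<le> (\<Sum>m\<in>S. norm (g m))" by (rule norm_sum)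
  also have "\<dots> \<le> (\<Sum>m\<in>S. Y)" using assms(3) by (rule sum_mono)
  also have "\<dots> = real (card S) * Y" by simp
  also have "\<dots> \<le> X * Y" using assms(2,4) by (rule mult_right_mono)
  finally show ?thesis .
qed

lemma powr_mono_exp: "real j \<ge> 1 \<Longrightarrow> c \<le> c' \<Longrightarrow> real j powr c \<le> real j powr c'"
  by (rule powr_mono) auto

lemma poly_mono:
  assumes "poly_conds C c A" "C \<le> C'" "c \<le> c'" "C > 0"
  shows "poly_conds C' c' A"
proof -
  have le: "C * real j powr c \<le> C' * real j powr c'" if "j \<ge> 1" for j
  proof -
    have "real j powr c \<le> real j powr c'" using that assms(3) by (intro powr_mono_exp) auto
    thus ?thesis using assms(2,4) by (intro mult_mono) auto
  qed
  show ?thesis unfolding poly_conds_def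
  proof (intro conjI allI impI)
    fix i j :: nat assume ij: "i \<ge> 1" "j \<ge> 1" "real i > C' * real j powr c'"
    hence "real i > C * real j powr c" using le[OF ij(2)] by linarith
    thus "A i j = 0" using assms(1) ij(1,2) unfolding poly_conds_def by blast
  next
    fix i j :: nat assume ij: "i \<ge> 1" "j \<ge> 1"
    hence "norm (A i j) \<le> C * real j powr c" using assms(1) unfolding poly_conds_def by blast
    thus "norm (A i j) \<le> C' * real j powr c'" using le[OF ij(2)] by linarith
  qed
qed

lemma part1:
  assumes "in_A A" "C > 0" "c > 0" "poly_conds C c A"
  shows "A \<in> DR"
proof -
  have "act f A \<in> DS" if "f \<in> DS" for f
  proof -
    from that obtain D d where D: "D > 0" "d > 0" "\<forall>n\<ge>1. norm (f n) \<le> D * real n powr d"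
      unfolding DS_def by auto
    define K where "K = C * C * D * C powr d"
    define e where "e = 2 * c + c * d"
    have K: "K > 0" unfolding K_def using assms D by auto
    have e: "e > 0" unfolding e_def using assms(3) D(2) by (intro add_pos_pos mult_pos_pos) auto
    have "norm (act f A n) \<le> K * real n powr e" if n: "n \<ge> 1" for n
    proof -
      let ?S = "{m. m \<ge> 1 \<and> A m n \<noteq> 0}"
      have np: "real n > 0" using n by simp
      have "norm (act f A n) \<le> (C * real n powr c) * ((C * real n powr c) * (D * (C * real n powr c) powr d))"
        unfolding act_def
      proof (rule sum_bound[OF supp_fin[OF assms(4) n] supp_card[OF assms(4) n assms(2)]])
        fix m assume m: "m \<in> ?S"
        have mle: "real m \<le> C * real n powr c"
        proof (rule ccontr)
          assume "\<not> real m \<le> C * real n powr c"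
          hence "real m > C * real n powr c" by simp
          hence "A m n = 0" using m assms(4) n unfolding poly_conds_def by blast
          thus False using m by simp
        qed
        have "norm (A m n) \<le> C * real n powr c" using m assms(4) n unfolding poly_conds_def by auto
        moreover have "norm (f m) \<le> D * real m powr d" using D m by auto
        moreover have "real m powr d \<le> (C * real n powr c) powr d"
          using mle m D by (intro powr_mono2) auto
        hence "D * real m powr d \<le> D * (C * real n powr c) powr d" using D by simp
        ultimately show "norm (A m n * f m) \<le> (C * real n powr c) * (D * (C * real n powr c) powr d)"
          using assms(2) unfolding norm_mult by (intro mult_mono) auto
      next
        show "0 \<le> C * real n powr c * (D * (C * real n powr c) powr d)" using assms D by auto
      qed
      also have "\<dots> = K * real n powr e"
      proof -
        have "(C * real n powr c) powr d = C powr d * real n powr (c * d)"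
          using assms(2) np by (simp add: powr_mult powr_powr)
        moreover have "real n powr e = real n powr c * real n powr c * real n powr (c * d)"
          unfolding e_def by (simp add: powr_add[symmetric])
        ultimately show ?thesis unfolding K_def by (simp add: ac_simps)
      qed
      finally show ?thesis .
    qed
    thus ?thesis unfolding DS_def using K e by blast
  qed
  thus ?thesis unfolding DR_def using assms(1) by blast
qed

lemma normalize:
  assumes "A \<in> PB"
  shows "\<exists>K e. K \<ge> 1 \<and> e \<ge> 1 \<and> poly_conds K e A"
proof -
  from assms obtain C c where Cc: "C > 0" "c > 0" "poly_conds C c A" unfolding PB_def by blast
  have "poly_conds (max 1 C) (max 1 c) A"
    by (rule poly_mono[OF Cc(3) _ _ Cc(1)]) simp_all
  moreover have "max 1 C \<ge> (1::real)" "max 1 c \<ge> (1::real)" by simp_all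
  ultimately show ?thesis by blast
qed

lemma normalize2:
  assumes "A \<in> PB" "B \<in> PB"
  shows "\<exists>K e. K \<ge> 1 \<and> e \<ge> 1 \<and> poly_conds K e A \<and> poly_conds K e B"
proof -
  obtain K1 e1 where 1: "K1 \<ge> 1" "e1 \<ge> 1" "poly_conds K1 e1 A" using normalize[OF assms(1)] by blast
  obtain K2 e2 where 2: "K2 \<ge> 1" "e2 \<ge> 1" "poly_conds K2 e2 B" using normalize[OF assms(2)] by blast
  have "poly_conds (max K1 K2) (max e1 e2) A" by (rule poly_mono[OF 1(3)]) (use 1 in simp_all)
  moreover have "poly_conds (max K1 K2) (max e1 e2) B" by (rule poly_mono[OF 2(3)]) (use 2 in simp_all)
  moreover have "max K1 K2 \<ge> 1" "max e1 e2 \<ge> 1" using 1 2 by simp_all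
  ultimately show ?thesis by blast
qed

lemma PB_intro: "C > 0 \<Longrightarrow> c > 0 \<Longrightarrow> poly_conds C c A \<Longrightarrow> A \<in> PB"
  unfolding PB_def using poly_in_A by blast

lemma add_conds:
  assumes "poly_conds K e A" "poly_conds K e B" "K \<ge> 1"
  shows "poly_conds (2 * K) e (mat_add A B)"
  unfolding poly_conds_def
proof (intro conjI allI impI)
  fix i j :: nat assume ij: "i \<ge> 1" "j \<ge> 1" "real i > 2 * K * real j powr e"
  have "K * real j powr e \<ge> 0" using assms(3) by simp
  hence "real i > K * real j powr e" using ij(3) by linarith
  hence "A i j = 0" "B i j = 0" using assms(1,2) ij(1,2) unfolding poly_conds_def by blast+
  thus "mat_add A B i j = 0" unfolding mat_add_def by simp
next
  fix i j :: nat assume ij: "i \<ge> 1" "j \<ge> 1"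
  have "norm (A i j) \<le> K * real j powr e" "norm (B i j) \<le> K * real j powr e"
    using assms(1,2) ij unfolding poly_conds_def by blast+
  moreover have "norm (A i j + B i j) \<le> norm (A i j) + norm (B i j)" by (rule norm_triangle_ineq)
  ultimately show "norm (mat_add A B i j) \<le> 2 * K * real j powr e" unfolding mat_add_def by linarith
qed

lemma neg_conds: "poly_conds K e A \<Longrightarrow> poly_conds K e (mat_neg A)"
  unfolding poly_conds_def mat_neg_def by auto

lemma mult_conds:
  assumes A: "poly_conds K e A" and B: "poly_conds K e B" and K: "K \<ge> 1" and e: "e \<ge> 1"
  shows "poly_conds (K powr (3 + e)) (2 * e + e * e) (mat_mult A B)"
  unfolding poly_conds_def
proof (intro conjI allI impI)
  fix i k :: nat assume ik: "i \<ge> 1" "k \<ge> 1" "real i > K powr (3 + e) * real k powr (2 * e + e * e)"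
  have kp: "real k \<ge> 1" using ik by simp
  have T: "K * real j powr e \<le> K powr (3 + e) * real k powr (2 * e + e * e)"
    if j: "j \<ge> 1" "B j k \<noteq> 0" for j
  proof -
    have jle: "real j \<le> K * real k powr e"
    proof (rule ccontr)
      assume "\<not> real j \<le> K * real k powr e"
      hence "real j > K * real k powr e" by simp
      hence "B j k = 0" using B j(1) ik(2) unfolding poly_conds_def by blast
      thus False using j by simp
    qed
    have "real j powr e \<le> (K * real k powr e) powr e" using jle j e by (intro powr_mono2) auto
    also have "\<dots> = K powr e * real k powr (e * e)" using K kp by (simp add: powr_mult powr_powr)
    finally have "K * real j powr e \<le> K * (K powr e * real k powr (e * e))" using K by simp
    also have "\<dots> = K powr (1 + e) * real k powr (e * e)" using K by (simp add: powr_add)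
    also have "\<dots> \<le> K powr (3 + e) * real k powr (2 * e + e * e)"
      using K kp e by (intro mult_mono powr_mono) auto
    finally show ?thesis .
  qed
  have "A i j * B j k = 0" if j: "j \<in> {j. j \<ge> 1 \<and> B j k \<noteq> 0}" for j
  proof -
    have "real i > K * real j powr e" using T[of j] j ik(3) by auto
    hence "A i j = 0" using A ik(1) j unfolding poly_conds_def by blast
    thus ?thesis by simp
  qed
  thus "mat_mult A B i k = 0" unfolding mat_mult_def by (intro sum.neutral) blast
next
  fix i k :: nat assume ik: "i \<ge> 1" "k \<ge> 1"
  have kp: "real k \<ge> 1" using ik by simp
  let ?T = "K powr (1 + e) * real k powr (e * e)"
  have T: "K * real j powr e \<le> ?T"
    if j: "j \<ge> 1" "B j k \<noteq> 0" for j
  proof -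
    have jle: "real j \<le> K * real k powr e"
    proof (rule ccontr)
      assume "\<not> real j \<le> K * real k powr e"
      hence "real j > K * real k powr e" by simp
      hence "B j k = 0" using B j(1) ik(2) unfolding poly_conds_def by blast
      thus False using j by simp
    qed
    have "real j powr e \<le> (K * real k powr e) powr e" using jle j e by (intro powr_mono2) auto
    also have "\<dots> = K powr e * real k powr (e * e)" using K kp by (simp add: powr_mult powr_powr)
    finally have "K * real j powr e \<le> K * (K powr e * real k powr (e * e))" using K by simp
    also have "\<dots> = K powr (1 + e) * real k powr (e * e)" using K by (simp add: powr_add)
    finally show ?thesis .
  qed
  have "norm (mat_mult A B i k) \<le> (K * real k powr e) * (?T * (K * real k powr e))"
    unfolding mat_mult_def
  proof (rule sum_bound[OF supp_fin[OF B ik(2)] supp_card[OF B ik(2)]])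
    show "K > 0" using K by simp
    fix j assume j: "j \<in> {j. j \<ge> 1 \<and> B j k \<noteq> 0}"
    have "norm (A i j) \<le> K * real j powr e" using A ik j unfolding poly_conds_def by auto
    also have "\<dots> \<le> ?T" using T j by auto
    finally have a: "norm (A i j) \<le> ?T" .
    have b: "norm (B j k) \<le> K * real k powr e" using B ik j unfolding poly_conds_def by auto
    show "norm (A i j * B j k) \<le> ?T * (K * real k powr e)"
      unfolding norm_mult using a b by (intro mult_mono) auto
  next
    show "0 \<le> ?T * (K * real k powr e)" using K by simp
  qed
  also have "\<dots> = K powr (3 + e) * real k powr (2 * e + e * e)"
  proof -
    have "K powr (3 + e) = K powr (1 + (1 + e) + 1)" by (simp add: algebra_simps)
    also have "\<dots> = K powr 1 * K powr (1 + e) * K powr 1" by (simp only: powr_add)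
    also have "\<dots> = K * K powr (1 + e) * K" using K by simp
    finally have "K powr (3 + e) = K * K powr (1 + e) * K" .
    moreover have "real k powr (2 * e + e * e) = real k powr (e + e * e + e)" by (simp add: algebra_simps)
    moreover have "real k powr (e + e * e + e) = real k powr e * real k powr (e * e) * real k powr e"
      by (simp only: powr_add)
    ultimately show ?thesis by (simp only: mult_ac)
  qed
  finally show "norm (mat_mult A B i k) \<le> K powr (3 + e) * real k powr (2 * e + e * e)" .
qed

theorem lemma2p1:
  shows "(\<forall>A C c. in_A A \<and> C > 0 \<and> c > 0 \<and> poly_conds C c A \<longrightarrow> A \<in> DR)
    \<and> PB \<subseteq> DR
    \<and> mat_zero \<in> PB \<and> mat_one \<in> PB
    \<and> (\<forall>A\<in>PB. \<forall>B\<in>PB. mat_add A B \<in> PB)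
    \<and> (\<forall>A\<in>PB. mat_neg A \<in> PB)
    \<and> (\<forall>A\<in>PB. \<forall>B\<in>PB. mat_mult A B \<in> PB)"
proof (intro conjI allI impI ballI subsetI)
  fix A C c assume "in_A A \<and> C > 0 \<and> c > 0 \<and> poly_conds C c A"
  thus "A \<in> DR" using part1 by blast
next
  fix A assume "A \<in> PB"
  thus "A \<in> DR" unfolding PB_def using part1 by blast
next
  show "mat_zero \<in> PB" by (rule PB_intro[of 1 1]) (auto simp: poly_conds_def mat_zero_def)
next
  show "mat_one \<in> PB" by (rule PB_intro[of 1 1]) (auto simp: poly_conds_def mat_one_def)
next
  fix A B assume "A \<in> PB" "B \<in> PB"
  then obtain K e where "K \<ge> 1" "e \<ge> 1" "poly_conds K e A" "poly_conds K e B"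
    using normalize2 by blast
  thus "mat_add A B \<in> PB" by (intro PB_intro[OF _ _ add_conds]) auto
next
  fix A assume "A \<in> PB"
  then obtain K e where "K \<ge> 1" "e \<ge> 1" "poly_conds K e A" using normalize by blast
  thus "mat_neg A \<in> PB" by (intro PB_intro[OF _ _ neg_conds]) auto
next
  fix A B assume "A \<in> PB" "B \<in> PB"
  then obtain K e where "K \<ge> 1" "e \<ge> 1" "poly_conds K e A" "poly_conds K e B"
    using normalize2 by blast
  moreover have "0 < 2 * e + e * e"
  proof -
    have "e * e \<ge> 0" by simp
    thus ?thesis using \<open>e \<ge> 1\<close> by linarith
  qed
  moreover have "0 < K powr (3 + e)" using \<open>K \<ge> 1\<close> by simp
  ultimately show "mat_mult A B \<in> PB" by (intro PB_intro[OF _ _ mult_conds[of K e]])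
qed

end
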